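(* Let $\varphi:S^1\to S^1$ be an orientation preserving circle homeomorphism with rational rotation number $\varrho=p/q$ ($p,q$ relatively prime) which is semi-periodic, i.e. not conjugate to the rotation $\mathcal{R}_{\varrho}$. Let $\Phi$ be a lift of $\varphi$, $x_0\in\mathbb{R}$, and let $\Gamma=\Gamma(x_0)$ be the curlicue generated by $u_n=\Phi^n(x_0)$. (a) If $\exp(2\pi\imath x_0)$ is a periodic point of $\varphi$, then the following are equivalent: (1) $\frac{1}{q}\sum_{k=0}^{q-1}\exp(2\pi\imath\Phi^k(x_0))=0$; (2) $\Gamma$ is bounded; (3) $\Gamma$ is an equilateral $q$-polygon (i.e. $z_q=z_0$). Moreover, $\Gamma$ (bounded or not) is not superficial, and $\Gamma$ is a regular polygon if and only if the displacements $\Phi^k(x_0)-\Phi^{k-1}(x_0)\bmod 1$, $k\ge1$, along the periodic orbit are all equal. (b) If $\exp(2\pi\imath x_0)$ is not a periodic point of $\varphi$ and $\Gamma$ is bounded, then $\Gamma$ is superficial.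
   Context: Identify $S^1=\mathbb{R}/\mathbb{Z}$ via $x\mapsto\exp(2\pi\imath x)$; a lift of $\varphi$ is a homeomorphism $\Phi:\mathbb{R}\to\mathbb{R}$ with $\Phi(x+1)=\Phi(x)+1$ projecting to $\varphi$. For a real sequence $u=(u_n)_{n\ge0}$, the curlicue $\Gamma(u)$ is the piecewise linear curve in $\mathbb{C}$ passing consecutively through $z_0=0$ and $z_n=\sum_{k=0}^{n-1}\exp(2\pi\imath u_k)$, $n\ge1$. A regular polygon is an equilateral and equiangular closed polygon, possibly self-intersecting (convex or star). For $t>0$, $\Gamma_t$ is the initial part of $\Gamma$ of length $t$ and $\Gamma^{\varepsilon}=\{y:\exists x\in\Gamma,|x-y|<\varepsilon\}$. An unbounded curve is superficial if $\lim_{t\to\infty}t/\mathrm{Diam}\,\Gamma_t=\infty$; a bounded curve is superficial if $\lim_{\varepsilon\to0}\mathrm{Area}(\Gamma^{\varepsilon})/\varepsilon=\infty$ (Area = 2-dimensional Lebesgue measure). *)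

theory Defs
  imports "HOL-Analysis.Analysis"
begin

definition circ :: "real \<Rightarrow> complex" where
  "circ x = exp (2 * pi * \<i> * complex_of_real x)"

definition is_oplift :: "(complex \<Rightarrow> complex) \<Rightarrow> (real \<Rightarrow> real) \<Rightarrow> bool" where
  "is_oplift \<phi> \<Phi> \<longleftrightarrow>
     (\<exists>\<Psi>. homeomorphism UNIV UNIV \<Phi> \<Psi>) \<and> (\<forall>x. \<Phi> (x + 1) = \<Phi> x + 1) \<and>
     (\<forall>x. \<phi> (circ x) = circ (\<Phi> x)) \<and> strict_mono \<Phi>"

definition rotation_number :: "(real \<Rightarrow> real) \<Rightarrow> real" where
  "rotation_number \<Phi> = frac (lim (\<lambda>n. (\<Phi> ^^ n) 0 / real n))"

definition rot :: "real \<Rightarrow> complex \<Rightarrow> complex" where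
  "rot \<rho> z = circ \<rho> * z"

definition conj_to_rotation :: "(complex \<Rightarrow> complex) \<Rightarrow> real \<Rightarrow> bool" where
  "conj_to_rotation \<phi> \<rho> \<longleftrightarrow>
     (\<exists>h h'. homeomorphism (sphere 0 1) (sphere 0 1) h h' \<and>
        (\<forall>z\<in>sphere 0 1. h (\<phi> z) = rot \<rho> (h z)))"

definition periodic_point :: "(complex \<Rightarrow> complex) \<Rightarrow> complex \<Rightarrow> bool" where
  "periodic_point \<phi> z \<longleftrightarrow> (\<exists>n>0. (\<phi> ^^ n) z = z)"

definition curl_pt :: "(nat \<Rightarrow> real) \<Rightarrow> nat \<Rightarrow> complex" where
  "curl_pt u n = (\<Sum>k<n. circ (u k))"

definition curlicue :: "(nat \<Rightarrow> real) \<Rightarrow> complex set" where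
  "curlicue u = (\<Union>n. closed_segment (curl_pt u n) (curl_pt u (Suc n)))"

definition curl_path :: "(nat \<Rightarrow> real) \<Rightarrow> real \<Rightarrow> complex" where
  "curl_path u s = curl_pt u (nat \<lfloor>s\<rfloor>) + complex_of_real (s - of_int \<lfloor>s\<rfloor>) * circ (u (nat \<lfloor>s\<rfloor>))"

text \<open>Initial part of length t (edges have unit length).\<close>
definition curl_init :: "(nat \<Rightarrow> real) \<Rightarrow> real \<Rightarrow> complex set" where
  "curl_init u t = curl_path u ` {0..t}"

definition nbhd :: "complex set \<Rightarrow> real \<Rightarrow> complex set" where
  "nbhd S \<epsilon> = {y. \<exists>x\<in>S. dist x y < \<epsilon>}"

definition superficial :: "(nat \<Rightarrow> real) \<Rightarrow> bool" where
  "superficial u \<longleftrightarrow>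
     (if bounded (curlicue u)
      then filterlim (\<lambda>\<epsilon>. measure lebesgue (nbhd (curlicue u) \<epsilon>) / \<epsilon>) at_top (at_right 0)
      else filterlim (\<lambda>t. t / diameter (curl_init u t)) at_top at_top)"

text \<open>The curlicue is a regular polygon: closed (periodic vertex sequence), equilateral
  (automatic: unit edges) and equiangular (constant signed turning between consecutive edges).\<close>
definition regular_polygon :: "(nat \<Rightarrow> real) \<Rightarrow> bool" where
  "regular_polygon u \<longleftrightarrow>
     (\<exists>m>0. \<forall>n. curl_pt u (n + m) = curl_pt u n) \<and>
     (\<exists>c. \<forall>n. circ (u (Suc n)) = c * circ (u n))"

end

theory Submission
  imports Defs
begin

lemma circ_add: "circ (x + y) = circ x * circ y"
  unfolding circ_def by (simp add: distrib_left exp_add)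

lemma circ_int [simp]: "circ (of_int k) = 1"
proof -
  have "circ (of_int k) = exp (complex_of_real (real_of_int (2 * k) * pi) * \<i>)"
    unfolding circ_def by (simp add: mult.commute mult.left_commute)
  also have "\<dots> = exp 0" by (subst exp_eq) (rule exI[of _ k], simp)
  finally show ?thesis by simp
qed

lemma circ_add_int [simp]: "circ (x + of_int k) = circ x"
  by (simp add: circ_add)

lemma norm_circ [simp]: "norm (circ x) = 1"
  unfolding circ_def by (simp add: norm_exp_eq_Re)

lemma circ_nz [simp]: "circ x \<noteq> 0"
  unfolding circ_def by simp

lemma circ_eq_iff: "circ x = circ y \<longleftrightarrow> (\<exists>k::int. x = y + of_int k)"
proof
  assume "circ x = circ y"
  then obtain n where "2 * pi * \<i> * complex_of_real x = 2 * pi * \<i> * complex_of_real y + complex_of_real (real_of_int (2 * n) * pi) * \<i>"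
    unfolding circ_def exp_eq by blast
  then have "complex_of_real (2 * pi * x) = complex_of_real (2 * pi * y + real_of_int (2 * n) * pi)"
    by (simp add: algebra_simps complex_eq_iff)
  then have "2 * pi * x = 2 * pi * y + real_of_int (2 * n) * pi" using of_real_eq_iff by blast
  then have "x * (2 * pi) = (y + of_int n) * (2 * pi)" by (simp add: algebra_simps)
  then have "x = y + of_int n" using pi_gt_zero by simp
  then show "\<exists>k::int. x = y + of_int k" by blast
next
  assume "\<exists>k::int. x = y + of_int k"
  then show "circ x = circ y" by auto
qed

lemma circ_diff: "circ (x - y) = circ x / circ y"
  using circ_add[of "x - y" y] by (simp add: field_simps)

lemma circ_frac: "circ (frac x) = circ x"
  using circ_add_int[of "frac x" "\<lfloor>x\<rfloor>"] by (simp add: frac_def)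

lemma frac_eq_iff_circ: "frac x = frac y \<longleftrightarrow> circ x = circ y"
proof
  assume "frac x = frac y" then show "circ x = circ y" by (metis circ_frac)
next
  assume "circ x = circ y"
  then obtain k where "x = y + of_int k" using circ_eq_iff by blast
  then show "frac x = frac y" by simp
qed

locale lift =
  fixes \<phi> :: "complex \<Rightarrow> complex" and \<Phi> :: "real \<Rightarrow> real"
  assumes sm: "strict_mono \<Phi>" and per: "\<And>x. \<Phi> (x + 1) = \<Phi> x + 1"
    and proj: "\<And>x. \<phi> (circ x) = circ (\<Phi> x)"
begin

lemma per_nat: "\<Phi> (x + of_nat k) = \<Phi> x + of_nat k"
  by (induction k arbitrary: x) (simp_all add: per add.assoc[symmetric])

lemma per_int: "\<Phi> (x + of_int k) = \<Phi> x + of_int k"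
proof (cases "k \<ge> 0")
  case True then show ?thesis using per_nat[of x "nat k"] by simp
next
  case False
  have "\<Phi> (x + of_int k + of_nat (nat (-k))) = \<Phi> (x + of_int k) + of_nat (nat (-k))"
    by (rule per_nat)
  then show ?thesis using False by simp
qed


lemma pow_int: "(\<Phi> ^^ n) (x + of_int k) = (\<Phi> ^^ n) x + of_int k"
  by (induction n arbitrary: x) (simp_all add: per_int)

lemma pow_less: "x < y \<Longrightarrow> (\<Phi> ^^ n) x < (\<Phi> ^^ n) y"
  by (induction n arbitrary: x y) (auto intro: strict_monoD[OF sm])

lemma pow_le: "x \<le> y \<Longrightarrow> (\<Phi> ^^ n) x \<le> (\<Phi> ^^ n) y"
  using pow_less[of x y n] by (cases "x = y") auto

lemma pow_inj: "(\<Phi> ^^ n) x = (\<Phi> ^^ n) y \<Longrightarrow> x = y"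
  using pow_less[of x y n] pow_less[of y x n] by (cases x y rule: linorder_cases) auto

lemma pow_proj: "(\<phi> ^^ n) (circ x) = circ ((\<Phi> ^^ n) x)"
  by (induction n) (simp_all add: proj)

lemma periodic_iff: "periodic_point \<phi> (circ x0) \<longleftrightarrow> (\<exists>n>0. \<exists>m::int. (\<Phi> ^^ n) x0 = x0 + of_int m)"
  unfolding periodic_point_def pow_proj circ_eq_iff by blast

lemma disp_bound: "\<bar>((\<Phi> ^^ k) x - x) - ((\<Phi> ^^ k) x0 - x0)\<bar> \<le> 1"
proof -
  define j where "j = \<lfloor>x - x0\<rfloor>"
  have a: "x0 + of_int j \<le> x" "x \<le> x0 + of_int j + 1"
    unfolding j_def by linarith+
  have "(\<Phi> ^^ k) (x0 + of_int j) \<le> (\<Phi> ^^ k) x" by (rule pow_le[OF a(1)])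
  moreover have "(\<Phi> ^^ k) x \<le> (\<Phi> ^^ k) (x0 + of_int (j+1))" using a(2) by (intro pow_le) simp
  ultimately show ?thesis using a unfolding pow_int by simp
qed

lemma pow_mult_period:
  assumes "(\<Phi> ^^ n) x0 = x0 + of_int m"
  shows "(\<Phi> ^^ (n * a)) x0 = x0 + of_int (int a * m)"
proof (induction a)
  case 0 then show ?case by simp
next
  case (Suc a)
  have "(\<Phi> ^^ (n * Suc a)) x0 = (\<Phi> ^^ n) ((\<Phi> ^^ (n * a)) x0)"
    by (simp add: funpow_add)
  also have "\<dots> = (\<Phi> ^^ n) x0 + of_int (int a * m)" using Suc pow_int[of n x0 "int a * m"] by simp
  also have "\<dots> = x0 + of_int (int (Suc a) * m)" using assms by (simp add: algebra_simps)
  finally show ?case .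
qed

lemma rot_lim:
  assumes n: "n > 0" and pm: "(\<Phi> ^^ n) x0 = x0 + of_int m"
  shows "(\<lambda>k. (\<Phi> ^^ k) 0 / real k) \<longlonglongrightarrow> real_of_int m / real n"
proof -
  define C where "C = Max ((\<lambda>b. \<bar>(\<Phi> ^^ b) x0 - x0 - real b * m / n\<bar>) ` {..<n})"
  have Cb: "\<bar>(\<Phi> ^^ b) x0 - x0 - real b * m / n\<bar> \<le> C" if "b < n" for b
    unfolding C_def using that by (intro Max_ge) auto
  have bnd: "\<bar>(\<Phi> ^^ k) 0 - real k * m / n\<bar> \<le> C + 1" for k
  proof -
    define a b where "a = k div n" and "b = k mod n"
    have kab: "k = n * a + b" unfolding a_def b_def by simp
    have "(\<Phi> ^^ k) x0 = (\<Phi> ^^ b) ((\<Phi> ^^ (n * a)) x0)"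
      by (simp add: kab funpow_add add.commute)
    also have "\<dots> = (\<Phi> ^^ b) x0 + of_int (int a * m)" using pow_mult_period[OF pm, of a] pow_int[of b x0 "int a * m"] by simp
    finally have e: "(\<Phi> ^^ k) x0 = (\<Phi> ^^ b) x0 + real a * m" by simp
    have e2: "real k * m / n = real b * m / n + real a * m"
      using n by (simp add: kab field_simps)
    have "b < n" unfolding b_def using n by simp
    then have "\<bar>(\<Phi> ^^ b) x0 - x0 - real b * m / n\<bar> \<le> C" using Cb by simp
    then have "\<bar>(\<Phi> ^^ k) x0 - x0 - real k * m / n\<bar> \<le> C" using e e2 by simp
    moreover have "\<bar>((\<Phi> ^^ k) 0 - 0) - ((\<Phi> ^^ k) x0 - x0)\<bar> \<le> 1" by (rule disp_bound)
    ultimately show ?thesis by linarith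
  qed
  have "(\<lambda>k. (\<Phi> ^^ k) 0 / real k - real_of_int m / real n) \<longlonglongrightarrow> 0"
  proof (rule Lim_null_comparison)
    show "\<forall>\<^sub>F k in sequentially. norm ((\<Phi> ^^ k) 0 / real k - real_of_int m / real n) \<le> (C + 1) * (1 / real k)"
    proof (rule eventually_sequentiallyI[of 1])
      fix k :: nat assume "1 \<le> k"
      then have k: "real k > 0" by simp
      have "(\<Phi> ^^ k) 0 / real k - real_of_int m / real n = ((\<Phi> ^^ k) 0 - real k * m / n) / real k"
        using k by (simp add: field_simps)
      then show "norm ((\<Phi> ^^ k) 0 / real k - real_of_int m / real n) \<le> (C + 1) * (1 / real k)"
        using bnd[of k] k by (simp add: divide_right_mono)
    qed
    show "(\<lambda>k. (C + 1) * (1 / real k)) \<longlonglongrightarrow> 0"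
      using tendsto_mult[OF tendsto_const lim_inverse_n'] by simp
  qed
  then show ?thesis using Lim_null by blast
qed

lemma rot_num:
  assumes n: "n > 0" and pm: "(\<Phi> ^^ n) x0 = x0 + of_int m"
  shows "rotation_number \<Phi> = frac (real_of_int m / real n)"
  unfolding rotation_number_def using limI[OF rot_lim[OF assms]] by simp


lemma pow_q_mult:
  assumes "(\<Phi> ^^ q) x0 > x0 + of_int c"
  shows "j \<ge> 1 \<Longrightarrow> (\<Phi> ^^ (q * j)) x0 > x0 + of_int (int j * c)"
proof (induction j rule: dec_induct)
  case base then show ?case using assms by simp
next
  case (step j)
  have "(\<Phi> ^^ (q * Suc j)) x0 = (\<Phi> ^^ q) ((\<Phi> ^^ (q * j)) x0)" by (simp add: funpow_add)
  also have "\<dots> > (\<Phi> ^^ q) (x0 + of_int (int j * c))" by (rule pow_less[OF step(3)])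
  also have "(\<Phi> ^^ q) (x0 + of_int (int j * c)) = (\<Phi> ^^ q) x0 + of_int (int j * c)" by (rule pow_int)
  finally show ?case using assms by (simp add: algebra_simps)
qed

lemma pow_q_mult':
  assumes "(\<Phi> ^^ q) x0 < x0 + of_int c"
  shows "j \<ge> 1 \<Longrightarrow> (\<Phi> ^^ (q * j)) x0 < x0 + of_int (int j * c)"
proof (induction j rule: dec_induct)
  case base then show ?case using assms by simp
next
  case (step j)
  have "(\<Phi> ^^ (q * Suc j)) x0 = (\<Phi> ^^ q) ((\<Phi> ^^ (q * j)) x0)" by (simp add: funpow_add)
  also have "\<dots> < (\<Phi> ^^ q) (x0 + of_int (int j * c))" by (rule pow_less[OF step(3)])
  also have "(\<Phi> ^^ q) (x0 + of_int (int j * c)) = (\<Phi> ^^ q) x0 + of_int (int j * c)" by (rule pow_int)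
  finally show ?case using assms by (simp add: algebra_simps)
qed

lemma period_q:
  assumes q: "q > 0" "coprime p q" and rho: "rotation_number \<Phi> = real p / real q"
    and n: "n > 0" and pm: "(\<Phi> ^^ n) x0 = x0 + of_int m"
  shows "q dvd n \<and> (\<exists>c::int. (\<Phi> ^^ q) x0 = x0 + of_int c)"
proof -
  define f where "f = \<lfloor>real_of_int m / real n\<rfloor>"
  have "frac (real_of_int m / real n) = real p / real q" using rot_num[OF n pm] rho by simp
  then have "real_of_int m / real n = real p / real q + of_int f" unfolding f_def frac_def by simp
  then have "real_of_int m * real q = real n * (real p + real q * of_int f)"
    using n q by (simp add: field_simps)
  then have eqi: "m * int q = int n * (int p + int q * f)"
    by (metis (mono_tags, opaque_lifting) of_int_eq_iff of_int_mult of_int_add of_int_of_nat_eq)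
  define c where "c = int p + int q * f"
  have cop: "coprime (int q) c"
  proof -
    have "coprime (int q) (int p)" using q(2) by (simp add: coprime_commute)
    moreover have "gcd (int q) c = gcd (int q) (int p)" unfolding c_def
      using gcd_add_mult[of "int q" f "int p"] by (simp add: algebra_simps)
    ultimately show ?thesis by (simp add: coprime_iff_gcd_eq_1)
  qed
  have "int q dvd int n * c" using eqi unfolding c_def by (metis dvd_triv_right)
  then have "int q dvd int n" using cop coprime_dvd_mult_left_iff by blast
  then have qn: "q dvd n" by simp
  then obtain r where r: "n = q * r" by blast
  have "m * int q = int q * (int r * c)" using eqi r c_def by (simp add: algebra_simps)
  then have mrc: "m = int r * c" using q by simp
  have r1: "r \<ge> 1" using n r by (cases r) auto
  have "(\<Phi> ^^ q) x0 = x0 + of_int c"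
  proof (rule ccontr)
    assume "(\<Phi> ^^ q) x0 \<noteq> x0 + of_int c"
    then consider "(\<Phi> ^^ q) x0 > x0 + of_int c" | "(\<Phi> ^^ q) x0 < x0 + of_int c" by linarith
    then show False
    proof cases
      case 1 from pow_q_mult[OF 1 r1] pm r mrc show False by simp
    next
      case 2 from pow_q_mult'[OF 2 r1] pm r mrc show False by simp
    qed
  qed
  with qn show ?thesis by blast
qed

end

lemma curl_pt_Suc: "curl_pt u (Suc n) = curl_pt u n + circ (u n)"
  unfolding curl_pt_def by simp

lemma curl_pt_0 [simp]: "curl_pt u 0 = 0"
  unfolding curl_pt_def by simp

lemma norm_curl_pt: "norm (curl_pt u n) \<le> real n"
  unfolding curl_pt_def using norm_sum[of "\<lambda>k. circ (u k)" "{..<n}"] by simp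

lemma seg_sub: "closed_segment (curl_pt u n) (curl_pt u (Suc n)) \<subseteq> curlicue u"
  unfolding curlicue_def by blast

lemma pt_in: "curl_pt u n \<in> curlicue u"
  using seg_sub[of u n] ends_in_segment(1) by blast

lemma curl_pt_shift:
  assumes "\<And>n. circ (u (n + q)) = circ (u n)"
  shows "curl_pt u (n + q) = curl_pt u n + curl_pt u q"
proof (induction n)
  case 0 then show ?case by simp
next
  case (Suc n)
  have "curl_pt u (Suc n + q) = curl_pt u (Suc (n + q))" by simp
  also have "\<dots> = curl_pt u (n + q) + circ (u (n + q))" by (rule curl_pt_Suc)
  finally show ?case using Suc assms by (simp add: curl_pt_Suc)
qed

lemma curl_pt_shift_mult:
  assumes "\<And>n. circ (u (n + q)) = circ (u n)"
  shows "curl_pt u (n + j * q) = curl_pt u n + of_nat j * curl_pt u q"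
proof (induction j)
  case 0 then show ?case by simp
next
  case (Suc j)
  have "curl_pt u (n + Suc j * q) = curl_pt u ((n + j * q) + q)" by (simp add: algebra_simps)
  also have "\<dots> = curl_pt u (n + j * q) + curl_pt u q" by (rule curl_pt_shift[where u=u and q=q, OF assms])
  finally show ?case using Suc by (simp add: algebra_simps)
qed

lemma bounded_iff_zero:
  assumes q: "q > 0" and per: "\<And>n. circ (u (n + q)) = circ (u n)"
  shows "bounded (curlicue u) \<longleftrightarrow> curl_pt u q = 0"
proof
  assume "bounded (curlicue u)"
  then obtain B where B: "\<And>x. x \<in> curlicue u \<Longrightarrow> norm x \<le> B" unfolding bounded_iff by blast
  show "curl_pt u q = 0"
  proof (rule ccontr)
    assume nz: "curl_pt u q \<noteq> 0"
    define j where "j = nat \<lceil>B / norm (curl_pt u q)\<rceil> + 1"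
    have "real j > B / norm (curl_pt u q)" unfolding j_def by linarith
    then have "real j * norm (curl_pt u q) > B" using nz by (simp add: field_simps)
    moreover have "curl_pt u (0 + j * q) = of_nat j * curl_pt u q" using curl_pt_shift_mult[where u=u and q=q, OF per, of 0 j] by simp
    then have "norm (of_nat j * curl_pt u q) \<le> B" using B[OF pt_in[of u "0 + j * q"]] by simp
    ultimately show False by (simp add: norm_mult)
  qed
next
  assume z: "curl_pt u q = 0"
  have pt: "curl_pt u n = curl_pt u (n mod q)" for n
    using curl_pt_shift_mult[where u=u and q=q, OF per, of "n mod q" "n div q"] z by simp
  have nb: "norm (curl_pt u n) \<le> real q" for n
  proof -
    have "n mod q < q" using q by simp
    then have "real (n mod q) \<le> real q" by simp
    moreover have "norm (curl_pt u n) \<le> real (n mod q)" using norm_curl_pt[of u "n mod q"] pt[of n] by simp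
    ultimately show ?thesis by linarith
  qed
  have "curlicue u \<subseteq> cball 0 (real q)"
    unfolding curlicue_def
  proof (rule UN_least)
    fix n
    show "closed_segment (curl_pt u n) (curl_pt u (Suc n)) \<subseteq> cball 0 (real q)"
      by (rule closed_segment_subset) (use nb in auto)
  qed
  then show "bounded (curlicue u)" using bounded_cball bounded_subset by blast
qed


lemma nbhd_eq: "nbhd S e = (\<Union>x\<in>S. ball x e)"
  unfolding nbhd_def by auto

lemma open_nbhd: "open (nbhd S e)"
  unfolding nbhd_eq by auto

lemma bounded_nbhd: "bounded S \<Longrightarrow> bounded (nbhd S e)"
proof -
  assume "bounded S"
  then obtain B where B: "\<And>x. x \<in> S \<Longrightarrow> norm x \<le> B" unfolding bounded_iff by blast
  have "nbhd S e \<subseteq> cball 0 (B + e)"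
  proof
    fix y assume "y \<in> nbhd S e"
    then obtain x where "x \<in> S" "dist x y < e" unfolding nbhd_def by blast
    then show "y \<in> cball 0 (B + e)" using B[of x] norm_triangle_ineq2[of y x]
      by (simp add: dist_norm norm_minus_commute)
  qed
  then show ?thesis using bounded_cball bounded_subset by blast
qed

lemma lmeas_nbhd: "bounded S \<Longrightarrow> nbhd S e \<in> lmeasurable"
  by (intro lmeasurable_open bounded_nbhd open_nbhd)

lemma ball_measure: "r \<ge> 0 \<Longrightarrow> measure lebesgue (ball (c::complex) r) = r^2 * pi"
  using content_ball[of r c] by (simp add: measure_completion unit_ball_vol_2)

lemma seg_cover:
  assumes e: "e > 0" and ab: "norm (b - a) = 1" and N: "N = nat \<lceil>1 / e\<rceil>"
  shows "nbhd (closed_segment a b) e \<subseteq> (\<Union>k\<in>{..N}. ball (a + (real k / real N) *\<^sub>R (b - a)) (2 * e))"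
proof
  fix y assume "y \<in> nbhd (closed_segment a b) e"
  then obtain x where x: "x \<in> closed_segment a b" "dist x y < e" unfolding nbhd_def by blast
  then obtain s where s: "0 \<le> s" "s \<le> 1" "x = (1 - s) *\<^sub>R a + s *\<^sub>R b" unfolding in_segment(1) by blast
  have Ng: "real N \<ge> 1 / e" unfolding N by linarith
  then have Npos: "real N > 0" using e by (smt (verit) divide_pos_pos)
  define k where "k = nat \<lfloor>s * real N\<rfloor>"
  have k1: "real k \<le> s * real N" "s * real N < real k + 1" unfolding k_def using s Npos by auto
  have "s * real N \<le> 1 * real N" using s Npos by (intro mult_right_mono) auto
  then have "real k \<le> real N" using k1 by linarith
  then have kN: "k \<le> N" by simp
  have d: "s - real k / real N = (s * real N - real k) / real N" using Npos by (simp add: field_simps)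
  have "\<bar>s * real N - real k\<bar> \<le> 1" using k1 by linarith
  then have "\<bar>s - real k / real N\<bar> \<le> 1 / real N" unfolding d using Npos
    by (simp add: divide_right_mono)
  also have "\<dots> \<le> e" using Ng e Npos by (simp add: field_simps)
  finally have sk: "\<bar>s - real k / real N\<bar> \<le> e" .
  have "x - (a + (real k / real N) *\<^sub>R (b - a)) = (s - real k / real N) *\<^sub>R (b - a)"
    using s(3) by (simp add: algebra_simps)
  then have "dist x (a + (real k / real N) *\<^sub>R (b - a)) \<le> e"
    using sk ab by (simp add: dist_norm)
  then have "dist (a + (real k / real N) *\<^sub>R (b - a)) y < 2 * e"
    using x(2) dist_triangle[of "a + (real k / real N) *\<^sub>R (b - a)" y x] by (simp add: dist_commute)
  then show "y \<in> (\<Union>k\<in>{..N}. ball (a + (real k / real N) *\<^sub>R (b - a)) (2 * e))"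
    using kN by auto
qed


lemma not_tendsto_bounded:
  assumes ev: "\<forall>\<^sub>F x in F. f x \<le> (K::real)" and F: "F \<noteq> bot"
  shows "\<not> filterlim f at_top F"
proof
  assume "filterlim f at_top F"
  then have "\<forall>\<^sub>F x in F. K + 1 \<le> f x" unfolding filterlim_at_top by blast
  with ev have "\<forall>\<^sub>F x in F. False" by (auto elim: eventually_elim2)
  with F show False by (simp add: eventually_False)
qed

lemma bounded_not_superficial:
  assumes q: "q > 0" and per: "\<And>n. circ (u (n + q)) = circ (u n)" and z: "curl_pt u q = 0"
  shows "\<not> filterlim (\<lambda>e. measure lebesgue (nbhd (curlicue u) e) / e) at_top (at_right 0)"
proof -
  have pt: "curl_pt u n = curl_pt u (n mod q)" for n
    using curl_pt_shift_mult[where u=u and q=q, OF per, of "n mod q" "n div q"] z by simp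
  define a where "a n = curl_pt u n" for n
  have seg: "closed_segment (curl_pt u m) (curl_pt u (Suc m)) = closed_segment (a (m mod q)) (a (Suc (m mod q)))" for m
    unfolding a_def using pt[of m] pt[of "Suc m"] pt[of "Suc (m mod q)"] by (simp add: mod_Suc_eq)
  have G: "curlicue u \<subseteq> (\<Union>n\<in>{..<q}. closed_segment (a n) (a (Suc n)))"
  proof
    fix x assume "x \<in> curlicue u"
    then obtain m where "x \<in> closed_segment (curl_pt u m) (curl_pt u (Suc m))" unfolding curlicue_def by blast
    then show "x \<in> (\<Union>n\<in>{..<q}. closed_segment (a n) (a (Suc n)))"
      by (intro UN_I[of "m mod q"]) (use q seg in auto)
  qed
  have ab: "norm (a (Suc n) - a n) = 1" for n unfolding a_def curl_pt_Suc by simp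
  have bd: "bounded (curlicue u)" using bounded_iff_zero[where u=u and q=q, OF q per] z by simp
  have "\<forall>\<^sub>F e in at_right 0. measure lebesgue (nbhd (curlicue u) e) / e \<le> 12 * pi * real q"
  proof -
    have "\<forall>\<^sub>F e in at_right (0::real). 0 < e \<and> e \<le> 1"
      using eventually_at_right_less[of 0] eventually_at_right[of 0 1]
      by (auto simp: eventually_at_right_field intro: exI[of _ 1])
    then show ?thesis
    proof (rule eventually_mono)
      fix e :: real assume e: "0 < e \<and> e \<le> 1"
      define N where "N = nat \<lceil>1 / e\<rceil>"
      define g where "g = (\<lambda>(n, k). a n + (real k / real N) *\<^sub>R (a (Suc n) - a n))"
      define U where "U = (\<Union>nk\<in>{..<q} \<times> {..N}. ball (g nk) (2 * e))"
      have sub: "nbhd (curlicue u) e \<subseteq> U"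
      proof
        fix y assume "y \<in> nbhd (curlicue u) e"
        then obtain x where "x \<in> curlicue u" "dist x y < e" unfolding nbhd_def by blast
        then obtain n where n: "n < q" "x \<in> closed_segment (a n) (a (Suc n))" using G by blast
        then have "y \<in> nbhd (closed_segment (a n) (a (Suc n))) e" using \<open>dist x y < e\<close> unfolding nbhd_def by blast
        then obtain k where "k \<le> N" "y \<in> ball (a n + (real k / real N) *\<^sub>R (a (Suc n) - a n)) (2 * e)"
          using seg_cover[of e "a (Suc n)" "a n" N] e ab N_def by blast
        then show "y \<in> U" unfolding U_def g_def using n by auto
      qed
      have fin: "finite ({..<q} \<times> {..N})" by simp
      have Um: "U \<in> lmeasurable" unfolding U_def
        by (intro lmeasurable_open bounded_UN open_UN) (auto simp: fin)
      have "measure lebesgue (nbhd (curlicue u) e) \<le> measure lebesgue U"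
        by (rule measure_mono_fmeasurable[OF sub]) (use lmeas_nbhd[OF bd] Um in auto)
      also have "\<dots> \<le> (\<Sum>nk\<in>{..<q} \<times> {..N}. measure lebesgue (ball (g nk) (2 * e)))"
        unfolding U_def by (rule measure_UNION_le) (auto simp: fin)
      also have "\<dots> = real q * (real N + 1) * (4 * e^2 * pi)"
      proof -
        have bm: "\<And>nk. measure lebesgue (ball (g nk) (2*e)) = (2*e)^2 * pi" by (rule ball_measure) (use e in simp)
        show ?thesis by (simp only: bm sum_constant card_cartesian_product card_lessThan card_atMost)
          (simp add: power_mult_distrib algebra_simps)
      qed
      also have "\<dots> \<le> real q * (3 / e) * (4 * e^2 * pi)"
      proof -
        have "real N = of_int \<lceil>1 / e\<rceil>" using e by (simp add: N_def)
        then have "real N \<le> 1 / e + 1" using ceiling_correct[of "1/e"] by linarith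
        moreover have "1 \<le> 1 / e" using e by (simp add: field_simps)
        ultimately have "real N + 1 \<le> 3 / e" by simp
        then show ?thesis by (intro mult_right_mono mult_left_mono) auto
      qed
      also have "\<dots> = 12 * pi * real q * e" using e by (simp add: field_simps power2_eq_square)
      finally show "measure lebesgue (nbhd (curlicue u) e) / e \<le> 12 * pi * real q"
        using e by (simp add: field_simps)
    qed
  qed
  then show ?thesis by (rule not_tendsto_bounded) simp
qed

lemma curl_path_nat [simp]: "curl_path u (real n) = curl_pt u n"
  unfolding curl_path_def by simp

lemma norm_curl_path: "s \<ge> 0 \<Longrightarrow> norm (curl_path u s) \<le> s + 1"
proof -
  assume s: "s \<ge> 0"
  have "norm (curl_path u s) \<le> norm (curl_pt u (nat \<lfloor>s\<rfloor>)) + norm (complex_of_real (s - of_int \<lfloor>s\<rfloor>) * circ (u (nat \<lfloor>s\<rfloor>)))"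
    unfolding curl_path_def by (rule norm_triangle_ineq)
  also have "\<dots> \<le> real (nat \<lfloor>s\<rfloor>) + 1"
  proof -
    have "\<bar>s - of_int \<lfloor>s\<rfloor>\<bar> \<le> 1" using floor_correct[of s] by linarith
    then have "norm (complex_of_real (s - of_int \<lfloor>s\<rfloor>) * circ (u (nat \<lfloor>s\<rfloor>))) \<le> 1"
      by (simp only: norm_mult norm_circ norm_of_real mult_1_right)
    then show ?thesis using norm_curl_pt[of u "nat \<lfloor>s\<rfloor>"] by linarith
  qed
  also have "\<dots> \<le> s + 1" using s by linarith
  finally show ?thesis .
qed

lemma bounded_curl_init: "bounded (curl_init u t)"
proof -
  have "curl_init u t \<subseteq> cball 0 (\<bar>t\<bar> + 1)"
  proof
    fix y assume "y \<in> curl_init u t"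
    then obtain s where "s \<in> {0..t}" "y = curl_path u s" unfolding curl_init_def by blast
    then show "y \<in> cball 0 (\<bar>t\<bar> + 1)" using norm_curl_path[of s u] by auto
  qed
  then show ?thesis using bounded_cball bounded_subset by blast
qed

lemma unbounded_not_superficial:
  assumes q: "q > 0" and per: "\<And>n. circ (u (n + q)) = circ (u n)" and z: "curl_pt u q \<noteq> 0"
  shows "\<not> filterlim (\<lambda>t. t / diameter (curl_init u t)) at_top at_top"
proof -
  define c where "c = norm (curl_pt u q)"
  have c: "c > 0" using z unfolding c_def by simp
  have "\<forall>\<^sub>F t in at_top. t / diameter (curl_init u t) \<le> 2 * real q / c"
    using eventually_ge_at_top[of "2 * real q"]
  proof (rule eventually_mono)
    fix t :: real assume t: "2 * real q \<le> t"
    define j where "j = nat \<lfloor>t / real q\<rfloor>"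
    have j1: "real j \<le> t / real q" "t / real q < real j + 1" unfolding j_def using t q by auto
    have jq: "real (j * q) \<le> t" using j1 q by (simp add: field_simps)
    have jt: "real j \<ge> t / (2 * real q)" using j1 t q by (simp add: field_simps)
    have "curl_path u (real 0) \<in> curl_init u t" unfolding curl_init_def using t by auto
    then have i0: "0 \<in> curl_init u t" by (simp only: curl_path_nat curl_pt_0)
    have "curl_path u (real (j * q)) \<in> curl_init u t" unfolding curl_init_def using jq by auto
    then have "curl_pt u (j * q) \<in> curl_init u t" by (simp only: curl_path_nat)
    note i0 this
    then have "dist 0 (curl_pt u (j * q)) \<le> diameter (curl_init u t)"
      by (intro diameter_bounded_bound bounded_curl_init)
    moreover have "curl_pt u (j * q) = of_nat j * curl_pt u q"
      using curl_pt_shift_mult[where u=u and q=q, OF per, of 0 j] by simp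
    ultimately have d: "real j * c \<le> diameter (curl_init u t)" unfolding c_def by (simp add: norm_mult)
    have tpos: "t > 0" using t q by simp
    have "t / (2 * real q) * c \<le> real j * c" using mult_right_mono[OF jt, of c] c by simp
    then have d2: "t / (2 * real q) * c \<le> diameter (curl_init u t)" using d by linarith
    have pos: "t / (2 * real q) * c > 0" using tpos q c by simp
    have "t / diameter (curl_init u t) \<le> t / (t / (2 * real q) * c)"
    proof -
      have dp: "diameter (curl_init u t) > 0" using d2 pos by linarith
      have "0 < diameter (curl_init u t) * (t / (2 * real q) * c)" using dp pos by (rule mult_pos_pos)
      then show ?thesis by (intro divide_left_mono[OF d2]) (use tpos in auto)
    qed
    also have "\<dots> = 2 * real q / c" using tpos q c by (simp add: field_simps)
    finally show "t / diameter (curl_init u t) \<le> 2 * real q / c" .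
  qed
  then show ?thesis by (rule not_tendsto_bounded) simp
qed


lemma Im_circ: "Im (circ t) = sin (2 * pi * t)"
  unfolding circ_def by (simp add: Im_exp)

lemma cnj_circ: "cnj (circ t) = circ (- t)"
  unfolding circ_def by (simp add: exp_cnj)

lemma circ_mult_cnj: "circ x * cnj (circ y) = circ (x - y)"
  by (simp add: cnj_circ circ_add[symmetric])

lemma Im_nonpar:
  assumes "circ x ^ 2 \<noteq> circ y ^ 2"
  shows "Im (circ x * cnj (circ y)) \<noteq> 0"
proof
  assume "Im (circ x * cnj (circ y)) = 0"
  then have "sin (2 * pi * (x - y)) = 0" by (simp add: circ_mult_cnj Im_circ)
  then obtain i where "2 * pi * (x - y) = real_of_int i * pi" using sin_zero_iff_int2 by blast
  then have "(2 * x) * pi = (2 * y + of_int i) * pi" by (simp add: algebra_simps)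
  then have "2 * x = 2 * y + of_int i" using pi_gt_zero by simp
  then have "circ (2 * x) = circ (2 * y)" by simp
  moreover have "circ (2 * t) = circ t ^ 2" for t using circ_add[of t t] by (simp add: power2_eq_square)
  ultimately show False using assms by simp
qed

lemma choose_nonpar:
  fixes u :: "nat \<Rightarrow> real"
  assumes inj: "inj (\<lambda>n. circ (u n))"
  shows "\<exists>I. finite I \<and> card I = M \<and> (\<forall>i\<in>I. \<forall>j\<in>I. i \<noteq> j \<longrightarrow> Im (circ (u i) * cnj (circ (u j))) \<noteq> 0)"
proof -
  define v where "v n = circ (u n)" for n
  define S where "S n = v n ^ 2" for n
  have inf: "infinite (range S)"
  proof
    assume fin: "finite (range S)"
    have "finite (S -` {w})" if "w \<in> range S" for w
    proof -
      obtain i where w: "w = S i" using \<open>w \<in> range S\<close> by blast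
      have "S -` {w} \<subseteq> v -` {v i, - v i}" unfolding w S_def by (auto simp: power2_eq_iff)
      moreover have "finite (v -` {v i, - v i})" using inj unfolding v_def by (intro finite_vimageI) auto
      ultimately show ?thesis by (rule finite_subset)
    qed
    then have "finite (\<Union>w\<in>range S. S -` {w})" using fin by blast
    moreover have "(\<Union>w\<in>range S. S -` {w}) = (UNIV :: nat set)" by auto
    ultimately show False by simp
  qed
  obtain W where W: "finite W" "card W = M" "W \<subseteq> range S" using infinite_arbitrarily_large[OF inf] by blast
  define ch where "ch w = (SOME n. S n = w)" for w
  have ch: "S (ch w) = w" if "w \<in> W" for w
    unfolding ch_def using W(3) that by (metis (mono_tags, lifting) imageE someI_ex subsetD)
  have injch: "inj_on ch W" by (metis ch inj_onI)
  define I where "I = ch ` W"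
  have "finite I" "card I = M" unfolding I_def using W injch by (auto simp: card_image)
  moreover have "\<forall>i\<in>I. \<forall>j\<in>I. i \<noteq> j \<longrightarrow> Im (circ (u i) * cnj (circ (u j))) \<noteq> 0"
  proof (intro ballI impI)
    fix i j assume "i \<in> I" "j \<in> I" "i \<noteq> j"
    then obtain wi wj where "wi \<in> W" "wj \<in> W" "i = ch wi" "j = ch wj" unfolding I_def by blast
    then have "S i \<noteq> S j" using ch \<open>i \<noteq> j\<close> by metis
    then show "Im (circ (u i) * cnj (circ (u j))) \<noteq> 0" unfolding S_def v_def by (rule Im_nonpar)
  qed
  ultimately show ?thesis by blast
qed

lemma card_small_diam:
  fixes S :: "nat set"
  assumes "finite S" "\<And>k1 k2. k1 \<in> S \<Longrightarrow> k2 \<in> S \<Longrightarrow> k2 \<le> k1 + B"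
  shows "card S \<le> B + 1"
proof (cases "S = {}")
  case True then show ?thesis by simp
next
  case False
  define m where "m = Min S"
  have "m \<in> S" unfolding m_def using assms(1) False by simp
  then have "S \<subseteq> {m..m + B}" using assms(2)[of m] assms(1) m_def by auto
  then have "card S \<le> card {m..m+B}" by (rule card_mono[rotated]) simp
  then show ?thesis by simp
qed



lemma area_lower:
  fixes u :: "nat \<Rightarrow> real"
  assumes bd: "bounded (curlicue u)" and I: "finite I" "card I = M" "M > 0"
    and np: "\<forall>i\<in>I. \<forall>j\<in>I. i \<noteq> j \<longrightarrow> Im (circ (u i) * cnj (circ (u j))) \<noteq> 0"
  shows "\<forall>\<^sub>F e in at_right 0. real M * pi / 8 \<le> measure lebesgue (nbhd (curlicue u) e) / e"
proof -
  define v where "v i = circ (u i)" for i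
  define a where "a i = curl_pt u i" for i
  define \<beta> where "\<beta> i j = Im (v i * cnj (v j))" for i j
  define \<alpha> where "\<alpha> i j = Im ((a i - a j) * cnj (v j))" for i j
  define P where "P = (\<lambda>(i, j). \<bar>\<beta> i j\<bar>) ` {(i, j). i \<in> I \<and> j \<in> I \<and> i \<noteq> j}"
  have "{(i, j). i \<in> I \<and> j \<in> I \<and> i \<noteq> j} \<subseteq> I \<times> I" by auto
  then have "finite {(i, j). i \<in> I \<and> j \<in> I \<and> i \<noteq> j}"
    using finite_subset finite_cartesian_product[OF I(1) I(1)] by blast
  then have finP: "finite P" unfolding P_def by (rule finite_imageI)
  define \<sigma> where "\<sigma> = Min (insert 1 P)"
  have \<sigma>pos: "\<sigma> > 0" unfolding \<sigma>_def using finP np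
    by (subst Min_gr_iff) (auto simp: P_def \<beta>_def v_def)
  have \<sigma>le: "\<sigma> \<le> \<bar>\<beta> i j\<bar>" if "i \<in> I" "j \<in> I" "i \<noteq> j" for i j
    unfolding \<sigma>_def using finP that by (intro Min_le) (auto simp: P_def)
  define B where "B = nat \<lfloor>1 / \<sigma>\<rfloor>"
  define C where "C = M * M * (B + 1)"
  define \<delta> where "\<delta> = real M / (8 * (real M + real C))"
  have \<delta>pos: "\<delta> > 0" unfolding \<delta>_def using I(3) by simp
  have vv: "v j * cnj (v j) = 1" for j unfolding v_def circ_mult_cnj by (simp add: circ_def)
  have nv: "norm (v j) = 1" for j unfolding v_def by simp
  have av: "a (Suc i) = a i + v i" for i unfolding a_def v_def by (simp add: curl_pt_Suc)
  have "\<forall>\<^sub>F e in at_right (0::real). 0 < e \<and> e < \<delta>"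
    using \<delta>pos by (auto simp: eventually_at_right_field intro: exI[of _ \<delta>])
  then show ?thesis
  proof (rule eventually_mono)
    fix e :: real assume e: "0 < e \<and> e < \<delta>"
    define K where "K = nat \<lfloor>1 / (4 * e)\<rfloor>"
    have K1: "real K \<le> 1 / (4 * e)" "1 / (4 * e) < real K + 1" unfolding K_def using e by auto
    define x where "x = (\<lambda>(i, k). a i + complex_of_real (4 * e * real k) * v i)"
    have imx: "Im ((x (i, k) - a j) * cnj (v j)) = \<alpha> i j + 4 * e * real k * \<beta> i j" for i k j
      unfolding x_def \<alpha>_def \<beta>_def by (simp add: algebra_simps)
    define A where "A = I \<times> {..<K}"
    define G where "G = {(i, k) \<in> A. \<forall>j\<in>I. j \<noteq> i \<longrightarrow> 2 * e < \<bar>Im ((x (i, k) - a j) * cnj (v j))\<bar>}"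
    have finA: "finite A" unfolding A_def using I(1) by simp
    have GA: "G \<subseteq> A" unfolding G_def by auto
    have finG: "finite G" using finA GA finite_subset by blast
    have xin: "x g \<in> curlicue u" if "g \<in> A" for g
    proof -
      obtain i k where g: "g = (i, k)" "k < K" using \<open>g \<in> A\<close> unfolding A_def by auto
      define s where "s = 4 * e * real k"
      have s0: "0 \<le> s" unfolding s_def using e by simp
      have "real k + 1 \<le> real K" using g(2) by linarith
      then have "s \<le> 4 * e * (real K - 1)" unfolding s_def using e by (simp add: mult_left_mono)
      also have "\<dots> \<le> 1" using K1 e by (simp add: field_simps)
      finally have s1: "s \<le> 1" .
      have "x g = (1 - s) *\<^sub>R a i + s *\<^sub>R a (Suc i)"
        unfolding g x_def av s_def by (simp add: scaleR_conv_of_real algebra_simps)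
      then have "x g \<in> closed_segment (a i) (a (Suc i))" unfolding in_segment(1) using s0 s1 by blast
      then show ?thesis unfolding a_def using seg_sub by blast
    qed
    define T where "T i j = {k. k < K \<and> \<bar>Im ((x (i, k) - a j) * cnj (v j))\<bar> \<le> 2 * e}" for i j
    have cardT: "card (T i j) \<le> B + 1" if "i \<in> I" "j \<in> I" "i \<noteq> j" for i j
    proof (rule card_small_diam)
      show "finite (T i j)" unfolding T_def by simp
      fix k1 k2 assume k: "k1 \<in> T i j" "k2 \<in> T i j"
      then have "\<bar>\<alpha> i j + 4 * e * real k1 * \<beta> i j\<bar> \<le> 2 * e" "\<bar>\<alpha> i j + 4 * e * real k2 * \<beta> i j\<bar> \<le> 2 * e"
        unfolding T_def imx by auto
      then have "\<bar>4 * e * ((real k2 - real k1) * \<beta> i j)\<bar> \<le> 4 * e" by (simp add: algebra_simps abs_le_iff)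
      then have "4 * e * \<bar>(real k2 - real k1) * \<beta> i j\<bar> \<le> 4 * e * 1" using e by (simp add: abs_mult)
      then have h: "\<bar>real k2 - real k1\<bar> * \<bar>\<beta> i j\<bar> \<le> 1" using e by (simp add: abs_mult)
      have "\<bar>real k2 - real k1\<bar> * \<sigma> \<le> \<bar>real k2 - real k1\<bar> * \<bar>\<beta> i j\<bar>"
        using \<sigma>le[OF that] by (simp add: mult_left_mono)
      then have "\<bar>real k2 - real k1\<bar> * \<sigma> \<le> 1" using h by linarith
      then have "\<bar>real k2 - real k1\<bar> \<le> 1 / \<sigma>" using \<sigma>pos by (simp add: field_simps)
      then have "of_int (int k2 - int k1) \<le> 1 / \<sigma>" by (simp add: abs_le_iff)
      then have f: "int k2 - int k1 \<le> \<lfloor>1 / \<sigma>\<rfloor>" by (simp add: le_floor_iff)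
      have f0: "0 \<le> \<lfloor>1 / \<sigma>\<rfloor>" using \<sigma>pos by simp
      have "int (k1 + B) = int k1 + \<lfloor>1 / \<sigma>\<rfloor>" unfolding B_def using f0 by simp
      then have "int k2 \<le> int (k1 + B)" using f by linarith
      then show "k2 \<le> k1 + B" by simp
    qed
    have bad: "A - G \<subseteq> (\<Union>i\<in>I. \<Union>j\<in>I - {i}. {i} \<times> T i j)"
    proof
      fix g assume g: "g \<in> A - G"
      then obtain i k where ik: "g = (i, k)" "i \<in> I" "k < K" unfolding A_def by blast
      with g obtain j where j: "j \<in> I" "j \<noteq> i" "\<not> 2 * e < \<bar>Im ((x (i, k) - a j) * cnj (v j))\<bar>"
        unfolding G_def A_def by blast
      then have "k \<in> T i j" unfolding T_def using ik by (simp only: mem_Collect_eq not_less)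
      then show "g \<in> (\<Union>i\<in>I. \<Union>j\<in>I - {i}. {i} \<times> T i j)" using ik j by blast
    qed
    have "card (A - G) \<le> (\<Sum>i\<in>I. card (\<Union>j\<in>I - {i}. {i} \<times> T i j))"
      by (rule order.trans[OF card_mono[OF _ bad] card_UN_le]) (use I(1) in \<open>auto simp: T_def\<close>)
    also have "\<dots> \<le> (\<Sum>i\<in>I. \<Sum>j\<in>I - {i}. card ({i} \<times> T i j))"
      by (intro sum_mono card_UN_le) (use I(1) in auto)
    also have "\<dots> \<le> (\<Sum>i\<in>I. \<Sum>j\<in>I - {i}. B + 1)"
      by (intro sum_mono) (use cardT in \<open>auto simp: card_cartesian_product\<close>)
    also have "\<dots> \<le> (\<Sum>i\<in>I. \<Sum>j\<in>I. B + 1)"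
      by (intro sum_mono sum_mono2) (use I(1) in auto)
    also have "\<dots> = C" unfolding C_def using I by (simp add: algebra_simps)
    finally have cbad: "card (A - G) \<le> C" .
    have "card A \<le> card (A - G) + card G"
      using card_Un_le[of "A - G" G] GA by (metis Un_Diff_cancel2 sup.absorb1)
    then have "M * K \<le> C + card G"
      using cbad I(2) unfolding A_def by (simp add: card_cartesian_product)
    then have "real (M * K) \<le> real (C + card G)" by (simp only: of_nat_le_iff)
    then have cG: "real M * real K - real C \<le> real (card G)" by simp
    have sep: "2 * e \<le> dist (x g1) (x g2)" if "g1 \<in> G" "g2 \<in> G" "g1 \<noteq> g2" for g1 g2
    proof -
      obtain i k j l where g: "g1 = (i, k)" "g2 = (j, l)" by fastforce
      show ?thesis
      proof (cases "i = j")
        case True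
        then have "k \<noteq> l" using that g by auto
        then have "1 \<le> \<bar>real k - real l\<bar>" by linarith
        then have "4 * e * 1 \<le> 4 * e * \<bar>real k - real l\<bar>" using e by (intro mult_left_mono) auto
        moreover have "x g1 - x g2 = complex_of_real (4 * e * (real k - real l)) * v i"
          unfolding g x_def True by (simp add: algebra_simps)
        then have "dist (x g1) (x g2) = 4 * e * \<bar>real k - real l\<bar>"
          unfolding dist_norm using e nv by (simp only: norm_mult norm_of_real abs_mult) simp
        ultimately show ?thesis using e by linarith
      next
        case False
        have "j \<in> I" using that(2) g unfolding G_def A_def by auto
        then have big: "2 * e < \<bar>Im ((x (i, k) - a j) * cnj (v j))\<bar>"
          using that(1) g False unfolding G_def by auto
        have xj: "x (j, l) = a j + complex_of_real (4 * e * real l) * v j"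
          unfolding x_def by simp
        have "(x (i, k) - x (j, l)) * cnj (v j) = (x (i, k) - a j) * cnj (v j) - complex_of_real (4 * e * real l) * (v j * cnj (v j))"
          unfolding xj by (simp only: algebra_simps)
        then have "Im ((x (i, k) - x (j, l)) * cnj (v j)) = Im ((x (i, k) - a j) * cnj (v j))"
          using vv by simp
        moreover have "\<bar>Im ((x (i, k) - x (j, l)) * cnj (v j))\<bar> \<le> norm (x (i, k) - x (j, l))"
          using abs_Im_le_cmod[of "(x (i, k) - x (j, l)) * cnj (v j)"] nv by (simp add: norm_mult)
        ultimately show ?thesis using big g by (simp add: dist_norm)
      qed
    qed
    have disj: "pairwise (\<lambda>g1 g2. disjnt (ball (x g1) e) (ball (x g2) e)) G"
    proof (rule pairwiseI)
      fix g1 g2 assume "g1 \<in> G" "g2 \<in> G" "g1 \<noteq> g2"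
      then have d: "2 * e \<le> dist (x g1) (x g2)" by (rule sep)
      show "disjnt (ball (x g1) e) (ball (x g2) e)"
        unfolding disjnt_def
      proof (rule ccontr)
        assume "ball (x g1) e \<inter> ball (x g2) e \<noteq> {}"
        then obtain y where "dist (x g1) y < e" "dist (x g2) y < e" by auto
        then show False using d dist_triangle[of "x g1" "x g2" y] by (simp add: dist_commute)
      qed
    qed
    have "measure lebesgue (\<Union>g\<in>G. ball (x g) e) = (\<Sum>g\<in>G. measure lebesgue (ball (x g) e))"
      by (rule measure_UNION'[OF finG _ disj]) auto
    also have "\<dots> = real (card G) * (e^2 * pi)"
    proof -
      have bm: "\<And>g. measure lebesgue (ball (x g) e) = e^2 * pi" by (rule ball_measure) (use e in simp)
      show ?thesis by (simp only: bm sum_constant)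
    qed
    finally have mU: "measure lebesgue (\<Union>g\<in>G. ball (x g) e) = real (card G) * (e^2 * pi)" .
    have subN: "(\<Union>g\<in>G. ball (x g) e) \<subseteq> nbhd (curlicue u) e"
    proof (rule UN_least)
      fix g assume g: "g \<in> G"
      then have xg: "x g \<in> curlicue u" using xin GA by blast
      show "ball (x g) e \<subseteq> nbhd (curlicue u) e"
      proof
        fix y assume "y \<in> ball (x g) e"
        then have "dist (x g) y < e" by simp
        then show "y \<in> nbhd (curlicue u) e" unfolding nbhd_def using xg by blast
      qed
    qed
    have "measure lebesgue (\<Union>g\<in>G. ball (x g) e) \<le> measure lebesgue (nbhd (curlicue u) e)"
      by (rule measure_mono_fmeasurable[OF subN]) (use lmeas_nbhd[OF bd] finG in auto)
    then have low: "real (card G) * (e^2 * pi) \<le> measure lebesgue (nbhd (curlicue u) e)" using mU by simp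
    have "real K > 1 / (4 * e) - 1" using K1 by linarith
    then have "real M * real K \<ge> real M * (1 / (4 * e) - 1)" using I(3) by (intro mult_left_mono) auto
    then have cG2: "real (card G) \<ge> real M / (4 * e) - real M - real C" using cG by (simp add: algebra_simps)
    have "(real M / (4 * e) - real M - real C) * (e * pi) = real M * pi / 4 - (real M + real C) * e * pi"
      using e by (simp add: field_simps)
    also have "\<dots> \<ge> real M * pi / 8"
    proof -
      have "(real M + real C) * e \<le> (real M + real C) * \<delta>" using e I(3) by (intro mult_left_mono) auto
      also have "\<dots> = real M / 8" unfolding \<delta>_def using I(3) by (simp add: field_simps)
      finally have "(real M + real C) * e * pi \<le> real M / 8 * pi" by (simp add: mult_right_mono)
      then show ?thesis by simp
    qed
    finally have "real M * pi / 8 \<le> (real M / (4 * e) - real M - real C) * (e * pi)" .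
    also have "\<dots> \<le> real (card G) * (e * pi)" using cG2 e by (intro mult_right_mono) auto
    also have "\<dots> = real (card G) * (e^2 * pi) / e" using e by (simp add: power2_eq_square)
    also have "\<dots> \<le> measure lebesgue (nbhd (curlicue u) e) / e" using low e by (simp add: divide_right_mono)
    finally show "real M * pi / 8 \<le> measure lebesgue (nbhd (curlicue u) e) / e" .
  qed
qed



lemma superficial_b:
  fixes u :: "nat \<Rightarrow> real"
  assumes inj: "inj (\<lambda>n. circ (u n))" and bd: "bounded (curlicue u)"
  shows "superficial u"
proof -
  have "filterlim (\<lambda>e. measure lebesgue (nbhd (curlicue u) e) / e) at_top (at_right 0)"
    unfolding filterlim_at_top
  proof
    fix Z :: real
    define M where "M = nat \<lceil>8 * Z / pi\<rceil> + 1"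
    have M0: "M > 0" unfolding M_def by simp
    have "real M \<ge> 8 * Z / pi" unfolding M_def by linarith
    then have MZ: "Z \<le> real M * pi / 8" using pi_gt_zero by (simp add: field_simps)
    obtain I where I: "finite I" "card I = M" "\<forall>i\<in>I. \<forall>j\<in>I. i \<noteq> j \<longrightarrow> Im (circ (u i) * cnj (circ (u j))) \<noteq> 0"
      using choose_nonpar[OF inj, of M] by blast
    have "\<forall>\<^sub>F e in at_right 0. real M * pi / 8 \<le> measure lebesgue (nbhd (curlicue u) e) / e"
      by (rule area_lower[OF bd I(1) I(2) M0 I(3)])
    then show "\<forall>\<^sub>F e in at_right 0. Z \<le> measure lebesgue (nbhd (curlicue u) e) / e"
      by (rule eventually_mono) (use MZ in linarith)
  qed
  then show ?thesis unfolding superficial_def using bd by simp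
qed

theorem proposition2p12:
  fixes \<phi> :: "complex \<Rightarrow> complex" and \<Phi> :: "real \<Rightarrow> real" and p q :: nat and x0 :: real
  assumes homeo: "\<exists>\<psi>. homeomorphism (sphere 0 1) (sphere 0 1) \<phi> \<psi>"
    and lift: "is_oplift \<phi> \<Phi>"
    and q: "q > 0" "p < q" "coprime p q"
    and rho: "rotation_number \<Phi> = real p / real q"
    and semi: "\<not> conj_to_rotation \<phi> (real p / real q)"
  shows "(periodic_point \<phi> (circ x0) \<longrightarrow>
            ((((1 / real q) * (\<Sum>k<q. circ ((\<Phi> ^^ k) x0)) = 0) \<longleftrightarrow> bounded (curlicue (\<lambda>n. (\<Phi> ^^ n) x0))) \<and>
             (bounded (curlicue (\<lambda>n. (\<Phi> ^^ n) x0)) \<longleftrightarrow> curl_pt (\<lambda>n. (\<Phi> ^^ n) x0) q = 0) \<and>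
             \<not> superficial (\<lambda>n. (\<Phi> ^^ n) x0) \<and>
             (q \<ge> 2 \<longrightarrow>
               (regular_polygon (\<lambda>n. (\<Phi> ^^ n) x0) \<longleftrightarrow>
                (\<forall>k\<ge>1. frac ((\<Phi> ^^ k) x0 - (\<Phi> ^^ (k - 1)) x0) = frac (\<Phi> x0 - x0))))))
       \<and> ((\<not> periodic_point \<phi> (circ x0) \<and> bounded (curlicue (\<lambda>n. (\<Phi> ^^ n) x0))) \<longrightarrow>
            superficial (\<lambda>n. (\<Phi> ^^ n) x0))"
proof -
  interpret L: lift \<phi> \<Phi>
    using lift unfolding is_oplift_def by unfold_locales auto
  define u where "u n = (\<Phi> ^^ n) x0" for n
  have u_eq: "(\<lambda>n. (\<Phi> ^^ n) x0) = u" unfolding u_def by simp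
  have partA: "periodic_point \<phi> (circ x0) \<longrightarrow>
            ((((1 / real q) * (\<Sum>k<q. circ (u k)) = 0) \<longleftrightarrow> bounded (curlicue u)) \<and>
             (bounded (curlicue u) \<longleftrightarrow> curl_pt u q = 0) \<and>
             \<not> superficial u \<and>
             (q \<ge> 2 \<longrightarrow>
               (regular_polygon u \<longleftrightarrow>
                (\<forall>k\<ge>1. frac (u k - u (k - 1)) = frac (u 1 - u 0)))))"
  proof
    assume "periodic_point \<phi> (circ x0)"
    then obtain n m where nm: "n > 0" "(\<Phi> ^^ n) x0 = x0 + of_int m" using L.periodic_iff by blast
    obtain c where c: "(\<Phi> ^^ q) x0 = x0 + of_int c" using L.period_q[OF q(1) q(3) rho nm] by blast
    have ushift: "u (k + q) = u k + of_int c" for k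
      unfolding u_def by (simp add: funpow_add c L.pow_int)
    have per: "\<And>k. circ (u (k + q)) = circ (u k)" using ushift by simp
    have bz: "bounded (curlicue u) \<longleftrightarrow> curl_pt u q = 0" by (rule bounded_iff_zero[where u=u and q=q, OF q(1) per])
    have s1: "((1 / real q) * (\<Sum>k<q. circ (u k)) = 0) \<longleftrightarrow> curl_pt u q = 0"
      unfolding curl_pt_def using q(1) by simp
    have ns: "\<not> superficial u"
    proof (cases "curl_pt u q = 0")
      case True
      then show ?thesis unfolding superficial_def using bz bounded_not_superficial[where u=u and q=q, OF q(1) per True] by simp
    next
      case False
      then show ?thesis unfolding superficial_def using bz unbounded_not_superficial[where u=u and q=q, OF q(1) per False] by simp
    qed
    have rp: "regular_polygon u \<longleftrightarrow> (\<forall>k\<ge>1. frac (u k - u (k - 1)) = frac (u 1 - u 0))" if q2: "q \<ge> 2"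
    proof
      assume "regular_polygon u"
      then obtain cc where cc: "\<And>n. circ (u (Suc n)) = cc * circ (u n)" unfolding regular_polygon_def by blast
      have d: "circ (u (Suc j) - u j) = cc" for j using cc[of j] by (simp add: circ_diff)
      show "\<forall>k\<ge>1. frac (u k - u (k - 1)) = frac (u 1 - u 0)"
      proof (intro allI impI)
        fix k :: nat assume "k \<ge> 1"
        then obtain j where k: "k = Suc j" by (cases k) auto
        show "frac (u k - u (k - 1)) = frac (u 1 - u 0)"
          unfolding frac_eq_iff_circ k using d[of j] d[of 0] by simp
      qed
    next
      assume H: "\<forall>k\<ge>1. frac (u k - u (k - 1)) = frac (u 1 - u 0)"
      define cc where "cc = circ (u 1 - u 0)"
      have step: "circ (u (Suc k)) = cc * circ (u k)" for k
      proof -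
        have "circ (u (Suc k) - u k) = cc" using H[rule_format, of "Suc k"] unfolding cc_def frac_eq_iff_circ by simp
        then show ?thesis using circ_add[of "u (Suc k) - u k" "u k"] by simp
      qed
      have c1: "cc \<noteq> 1"
      proof
        assume "cc = 1"
        then have "circ (u 1) = circ (u 0)" using step[of 0] by simp
        then obtain m' where "u 1 = u 0 + of_int m'" using circ_eq_iff by blast
        then have "(\<Phi> ^^ 1) x0 = x0 + of_int m'" unfolding u_def by simp
        then have "q dvd 1" using L.period_q[OF q(1) q(3) rho, of 1 x0 m'] by simp
        then show False using q2 by simp
      qed
      have pw: "circ (u k) = cc ^ k * circ (u 0)" for k
      proof (induction k)
        case 0 show ?case by simp
      next
        case (Suc k) show ?case unfolding step Suc by simp
      qed
      have "cc ^ q * circ (u 0) = circ (u 0)" using pw[of q] per[of 0] by simp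
      then have cq: "cc ^ q = 1" by simp
      have "curl_pt u q = (\<Sum>k<q. cc ^ k * circ (u 0))" unfolding curl_pt_def by (intro sum.cong refl pw)
      also have "\<dots> = (\<Sum>k<q. cc ^ k) * circ (u 0)" by (simp add: sum_distrib_right)
      also have "\<dots> = 0" using geometric_sum[OF c1, of q] cq by simp
      finally have zq: "curl_pt u q = 0" .
      have "\<forall>n. curl_pt u (n + q) = curl_pt u n"
        using curl_pt_shift[where u=u and q=q, OF per] zq by simp
      then show "regular_polygon u" unfolding regular_polygon_def using q(1) step by blast
    qed
    show "((1 / real q) * (\<Sum>k<q. circ (u k)) = 0 \<longleftrightarrow> bounded (curlicue u)) \<and>
          (bounded (curlicue u) \<longleftrightarrow> curl_pt u q = 0) \<and> \<not> superficial u \<and>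
          (q \<ge> 2 \<longrightarrow> (regular_polygon u \<longleftrightarrow> (\<forall>k\<ge>1. frac (u k - u (k - 1)) = frac (u 1 - u 0))))"
      using s1 bz ns rp by blast
  qed
  have partB: "(\<not> periodic_point \<phi> (circ x0) \<and> bounded (curlicue u)) \<longrightarrow> superficial u"
  proof
    assume H: "\<not> periodic_point \<phi> (circ x0) \<and> bounded (curlicue u)"
    have key: "i = j" if le: "i \<le> j" and ceq: "circ (u i) = circ (u j)" for i j
    proof (rule ccontr)
      assume "i \<noteq> j"
      then have ij: "j - i > 0" using le by simp
      obtain m where m: "u j = u i + of_int m" using ceq circ_eq_iff by metis
      have "(\<Phi> ^^ i) ((\<Phi> ^^ (j - i)) x0) = u j"
      proof -
        have "(\<Phi> ^^ (i + (j - i))) x0 = (\<Phi> ^^ i) ((\<Phi> ^^ (j - i)) x0)" by (simp only: funpow_add comp_def)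
        then show ?thesis using le by (simp add: u_def)
      qed
      also have "\<dots> = (\<Phi> ^^ i) (x0 + of_int m)" using m by (simp add: u_def L.pow_int)
      finally have "(\<Phi> ^^ (j - i)) x0 = x0 + of_int m" by (rule L.pow_inj)
      then have "periodic_point \<phi> (circ x0)" using L.periodic_iff ij by blast
      then show False using H by blast
    qed
    have "inj (\<lambda>n. circ (u n))"
    proof (rule injI)
      fix i j assume e: "circ (u i) = circ (u j)"
      show "i = j"
      proof (cases "i \<le> j")
        case True then show ?thesis using key e by blast
      next
        case False then show ?thesis using key[of j i] e by simp
      qed
    qed
    then show "superficial u" using superficial_b H by blast
  qed
  have f1: "\<Phi> x0 - x0 = u 1 - u 0" unfolding u_def by simp
  have f2: "(\<Sum>k<q. circ ((\<Phi> ^^ k) x0)) = (\<Sum>k<q. circ (u k))" unfolding u_def by simp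
  have f3: "(\<lambda>k. frac ((\<Phi> ^^ k) x0 - (\<Phi> ^^ (k - 1)) x0)) = (\<lambda>k. frac (u k - u (k - 1)))" unfolding u_def by simp
  have f4: "\<And>k. (\<Phi> ^^ k) x0 = u k" unfolding u_def by simp
  show ?thesis unfolding u_eq f1 f4 using partA partB by simp
qed


end
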